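(* Fix $p\geq 3$ and put $\lambda=\lambda_p=2\cos(\pi/p)$. Then every admissible $\lambda$-continued fraction converges; that is, for every real $\alpha$ with admissible $\lambda$-continued fraction $[r_0;r_1,\dots]$, the limit $\lim_{n\to\infty}[r_0;r_1,\dots,r_n]$ exists.
   Context: For integers $r_0,\dots,r_n$, the finite $\lambda$-continued fraction is $[r_0;r_1,\dots,r_n]= r_0\lambda-\cfrac{1}{r_1\lambda-\cfrac{1}{\ddots-\cfrac{1}{r_n\lambda}}}$, and an infinite one $[r_0;r_1,\dots]$ is $\lim_{n\to\infty}[r_0;r_1,\dots,r_n]$ if the limit exists. Every finite real $\alpha$ is expanded by the "next integral multiple of $\lambda$" algorithm: $\alpha_0=\alpha$, and for $j\ge 0$, $r_j=\lfloor \alpha_j/\lambda\rfloor+1$ and $\alpha_{j+1}=\frac{1}{r_j\lambda-\alpha_j}$. The resulting sequence $[r_0;r_1,\dots]$ is the $\lambda$-continued fraction of $\alpha$; a $\lambda$-continued fraction is called admissible if it arises from some finite real number by this algorithm. *)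

theory Defs
  imports Complex_Main
begin

definition lam :: "nat \<Rightarrow> real" where
  "lam p = 2 * cos (pi / real p)"

text \<open>The "next integral multiple of lambda" algorithm:
  alpha_0 = alpha, r_j = floor(alpha_j / lambda) + 1, alpha_(j+1) = 1/(r_j lambda - alpha_j).\<close>
fun cf_alpha :: "real \<Rightarrow> real \<Rightarrow> nat \<Rightarrow> real" where
  "cf_alpha l \<alpha> 0 = \<alpha>"
| "cf_alpha l \<alpha> (Suc j) =
     1 / (real_of_int (\<lfloor>cf_alpha l \<alpha> j / l\<rfloor> + 1) * l - cf_alpha l \<alpha> j)"

definition cf_digits :: "real \<Rightarrow> real \<Rightarrow> nat \<Rightarrow> int" where
  "cf_digits l \<alpha> j = \<lfloor>cf_alpha l \<alpha> j / l\<rfloor> + 1"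

text \<open>cf_tail l r k m is the finite lambda-continued fraction [r_k; r_(k+1), ..., r_(k+m)].\<close>
fun cf_tail :: "real \<Rightarrow> (nat \<Rightarrow> int) \<Rightarrow> nat \<Rightarrow> nat \<Rightarrow> real" where
  "cf_tail l r k 0 = real_of_int (r k) * l"
| "cf_tail l r k (Suc m) = real_of_int (r k) * l - 1 / cf_tail l r (Suc k) m"

definition cf_conv :: "real \<Rightarrow> (nat \<Rightarrow> int) \<Rightarrow> nat \<Rightarrow> real" where
  "cf_conv l r n = cf_tail l r 0 n"

end

theory Submission
  imports Defs
begin

lemma digit_gt:
  assumes "l > 0"
  shows "cf_alpha l a k < real_of_int (cf_digits l a k) * l"
proof -
  have "cf_alpha l a k / l < real_of_int (\<lfloor>cf_alpha l a k / l\<rfloor> + 1)"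
    by linarith
  then show ?thesis using pos_divide_less_eq[OF assms] unfolding cf_digits_def
    by blast
qed

lemma alpha_pos:
  assumes "l > 0"
  shows "cf_alpha l a (Suc k) > 0"
  using digit_gt[OF assms, of a k] by (simp add: cf_digits_def)

lemma alpha_rec:
  "1 / cf_alpha l a (Suc k) = real_of_int (cf_digits l a k) * l - cf_alpha l a k"
  by (simp add: cf_digits_def)

lemma key_ineq:
  fixes A T R B :: real
  assumes "0 < A" "A < T" "1 / A = R - B"
  shows "R - 1 / T > B"
proof -
  have "1 / T < 1 / A" using assms(1,2) by (intro divide_strict_left_mono) auto
  then show ?thesis using assms(3) by linarith
qed

lemma tail_gt:
  assumes "l > 0"
  shows "cf_tail l (cf_digits l a) k m > cf_alpha l a k"
proof (induction m arbitrary: k)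
  case 0
  then show ?case using digit_gt[OF assms] by simp
next
  case (Suc m)
  have p: "cf_alpha l a (Suc k) > 0" using alpha_pos[OF assms] .
  have ih: "cf_tail l (cf_digits l a) (Suc k) m > cf_alpha l a (Suc k)" using Suc .
  have "real_of_int (cf_digits l a k) * l - 1 / cf_tail l (cf_digits l a) (Suc k) m > cf_alpha l a k"
    by (rule key_ineq[OF p ih alpha_rec])
  then show ?case by (simp only: cf_tail.simps)
qed

lemma tail_dec:
  assumes "l > 0"
  shows "cf_tail l (cf_digits l a) k (Suc m) < cf_tail l (cf_digits l a) k m"
proof (induction m arbitrary: k)
  case 0
  have "cf_tail l (cf_digits l a) (Suc k) 0 > 0"
    using tail_gt[OF assms, of a "Suc k" 0] alpha_pos[OF assms, of a k] by linarith
  then show ?case by simp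
next
  case (Suc m)
  have p: "cf_tail l (cf_digits l a) (Suc k) (Suc m) > 0"
    using tail_gt[OF assms, of a "Suc k" "Suc m"] alpha_pos[OF assms, of a k] by linarith
  have ih: "cf_tail l (cf_digits l a) (Suc k) (Suc m) < cf_tail l (cf_digits l a) (Suc k) m"
    using Suc .
  have "1 / cf_tail l (cf_digits l a) (Suc k) m < 1 / cf_tail l (cf_digits l a) (Suc k) (Suc m)"
    using p ih by (simp add: divide_strict_left_mono)
  then show ?case by simp
qed

lemma lam_pos:
  assumes "p \<ge> 3"
  shows "lam p > 0"
proof -
  have "pi / real p > 0" using assms by simp
  moreover have "pi / real p < pi / 2"
  proof -
    have "real p > 2" using assms by simp
    then show ?thesis using pi_gt_zero by (intro divide_strict_left_mono) auto
  qed
  ultimately have "cos (pi / real p) > 0" by (intro cos_gt_zero_pi) auto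
  then show ?thesis by (simp add: lam_def)
qed

theorem lemma2p1:
  fixes p :: nat and \<alpha> :: real
  assumes "p \<ge> 3"
  shows "convergent (\<lambda>n. cf_conv (lam p) (cf_digits (lam p) \<alpha>) n)"
proof -
  have l: "lam p > 0" using lam_pos[OF assms] .
  let ?X = "\<lambda>n. cf_conv (lam p) (cf_digits (lam p) \<alpha>) n"
  have "decseq ?X"
  proof (rule decseq_SucI)
    fix n
    show "?X (Suc n) \<le> ?X n" unfolding cf_conv_def
      using tail_dec[OF l, of \<alpha> 0 n] by (rule less_imp_le)
  qed
  moreover have "\<forall>i. \<alpha> \<le> ?X i"
  proof
    fix i
    have "cf_alpha (lam p) \<alpha> 0 < cf_tail (lam p) (cf_digits (lam p) \<alpha>) 0 i"
      by (rule tail_gt[OF l])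
    then show "\<alpha> \<le> ?X i" unfolding cf_conv_def by simp
  qed
  ultimately obtain L where "?X \<longlonglongrightarrow> L" by (rule decseq_convergent)
  then show ?thesis by (auto simp: convergent_def)
qed

end
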